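(* Let $f$ be a Hamiltonian stationary torus. The monodromy $H^\mu$ of the flat connection $d^\mu$ is a complex multiple of the identity if and only if $\mu\in S^1$ with $\beta_0\overline{\sqrt\mu}\in\Gamma^*$.
   Context: Identify $\mathbb R^4$ with $\mathbb H$ and $\mathbb C$ with $\mathrm{span}_{\mathbb R}\{1,i\}$; $\langle\cdot,\cdot\rangle$ is the Euclidean inner product on $\mathbb C\cong\mathbb R^2$. $\Gamma\subset\mathbb C$ a lattice, $\Gamma^*$ its dual lattice. A Hamiltonian stationary torus is a $\Gamma$-periodic conformal immersion $f:\mathbb C\to\mathbb H$ with $df=e^{j\beta/2}dz\,g$, $dz=dx+i\,dy$, $g$ nowhere zero, $\beta(z)=2\pi\langle\beta_0,z\rangle$, $0\ne\beta_0\in\Gamma^*$; convention $*dz=i\,dz$; left normal $N=e^{j\beta}i$. With $(dN)'=\frac12(dN-N*dN)$ define $H$ by $(dN)'=-df\,H$. Regard $\mathbb H$ as $\mathbb C^2$ via right multiplication by $i$. For $\mu\in\mathbb C_*$, $d^\mu$ is the flat complex connection on the trivial $\mathbb C^2$-bundle given by $d^\mu\alpha=d\alpha+\frac12df\,H\,(N\alpha(a-1)+\alpha b)$, $a=\frac{\mu+\mu^{-1}}2$, $b=\frac{\mu^{-1}-\mu}2i$ (acting from the right). $H^\mu$ denotes its monodromy (holonomy along the lattice translations $\gamma\in\Gamma$) acting on the 2-dimensional space of parallel sections; the condition is independent of the choice of square root $\sqrt\mu$. *)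

theory Defs
  imports "HOL-Analysis.Analysis"
begin

text \<open>A quaternion is represented as a pair (a,b) of complex numbers standing for
  a + b j, where the complex numbers are span{1,i}. Then k = i j = (0, i), and
  j c = cnj c j for complex c, which gives the multiplication below. The norm of the
  product type is the Euclidean norm on R^4 = H.\<close>

type_synonym quat = "complex \<times> complex"

definition qmult :: "quat \<Rightarrow> quat \<Rightarrow> quat" (infixl "\<odot>" 70) where
  "p \<odot> q = (fst p * fst q - snd p * cnj (snd q), fst p * snd q + snd p * cnj (fst q))"

definition qc :: "complex \<Rightarrow> quat" where
  "qc z = (z, 0)"

definition qexpj :: "real \<Rightarrow> quat" where
  "qexpj t = (complex_of_real (cos t), complex_of_real (sin t))"

definition ip :: "complex \<Rightarrow> complex \<Rightarrow> real" where
  "ip a b = Re (a * cnj b)"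

definition lattice_gen :: "complex \<Rightarrow> complex \<Rightarrow> complex set" where
  "lattice_gen w1 w2 = {of_int m * w1 + of_int n * w2 | m n. True}"

definition dual_lattice :: "complex set \<Rightarrow> complex set" where
  "dual_lattice L = {w. \<forall>\<gamma>\<in>L. ip w \<gamma> \<in> \<int>}"

coinductive smooth_fun :: "('a::real_normed_vector \<Rightarrow> 'b::real_normed_vector) \<Rightarrow> bool" where
  "(\<forall>z. f differentiable (at z)) \<Longrightarrow>
   (\<forall>v. smooth_fun (\<lambda>z. frechet_derivative f (at z) v)) \<Longrightarrow> smooth_fun f"

definition hs_beta :: "complex \<Rightarrow> complex \<Rightarrow> real" where
  "hs_beta \<beta>0 z = 2 * pi * ip \<beta>0 z"

text \<open>df_z(v) = e^(j beta(z)/2) dz(v) g(z), with dz(v) = v.\<close>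
definition hs_df :: "complex \<Rightarrow> (complex \<Rightarrow> quat) \<Rightarrow> complex \<Rightarrow> complex \<Rightarrow> quat" where
  "hs_df \<beta>0 g z v = qexpj (hs_beta \<beta>0 z / 2) \<odot> qc v \<odot> g z"

definition hs_N :: "complex \<Rightarrow> complex \<Rightarrow> quat" where
  "hs_N \<beta>0 z = qexpj (hs_beta \<beta>0 z) \<odot> qc \<i>"

text \<open>(omega)' = 1/2 (omega - N * omega), where (* omega)(v) = omega(i v)
  (so that * dz = i dz).\<close>
definition dprime :: "quat \<Rightarrow> (complex \<Rightarrow> quat) \<Rightarrow> complex \<Rightarrow> quat" where
  "dprime N \<omega> v = (1/2) *\<^sub>R (\<omega> v - N \<odot> \<omega> (\<i> * v))"

definition mu_a :: "complex \<Rightarrow> complex" where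
  "mu_a \<mu> = (\<mu> + inverse \<mu>) / 2"

definition mu_b :: "complex \<Rightarrow> complex" where
  "mu_b \<mu> = (inverse \<mu> - \<mu>) / 2 * \<i>"

definition parallel_section ::
  "complex \<Rightarrow> (complex \<Rightarrow> quat) \<Rightarrow> (complex \<Rightarrow> quat) \<Rightarrow> complex \<Rightarrow> (complex \<Rightarrow> quat) \<Rightarrow> bool" where
  "parallel_section \<beta>0 g H \<mu> \<alpha> \<longleftrightarrow>
     (\<forall>z. \<exists>D. (\<alpha> has_derivative D) (at z) \<and>
        (\<forall>v. D v + (1/2) *\<^sub>R (hs_df \<beta>0 g z v \<odot> H z \<odot>
              (hs_N \<beta>0 z \<odot> \<alpha> z \<odot> qc (mu_a \<mu> - 1) + \<alpha> z \<odot> qc (mu_b \<mu>))) = 0))"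

text \<open>The monodromy H^mu is a complex multiple of the identity: for every lattice
  translation gamma there is a complex number c with alpha(z + gamma) = alpha(z) c for
  every parallel section alpha (complex structure = right multiplication by i).\<close>
definition monodromy_scalar ::
  "complex set \<Rightarrow> complex \<Rightarrow> (complex \<Rightarrow> quat) \<Rightarrow> (complex \<Rightarrow> quat) \<Rightarrow> complex \<Rightarrow> bool" where
  "monodromy_scalar \<Gamma> \<beta>0 g H \<mu> \<longleftrightarrow>
     (\<forall>\<gamma>\<in>\<Gamma>. \<exists>c::complex. \<forall>\<alpha>. parallel_section \<beta>0 g H \<mu> \<alpha> \<longrightarrow>
        (\<forall>z. \<alpha> (z + \<gamma>) = \<alpha> z \<odot> qc c))"

end

theory Submission
  imports Defs
begin

definition ru :: "complex \<Rightarrow> complex \<Rightarrow> complex \<Rightarrow> complex \<Rightarrow> complex \<Rightarrow> complex \<Rightarrow> complex \<Rightarrow> complex \<Rightarrow> complex" where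
"ru A B c \<sigma> db ds u w = (1/4) * (- \<i>*\<sigma>* db*(\<i>*(c* u + \<sigma>* w)*(A-1) + u* B) + (\<i>* c* db + ds)*(-\<i>*(c* w - \<sigma>* u)*(A-1) + w* B))"
definition rw :: "complex \<Rightarrow> complex \<Rightarrow> complex \<Rightarrow> complex \<Rightarrow> complex \<Rightarrow> complex \<Rightarrow> complex \<Rightarrow> complex \<Rightarrow> complex" where
"rw A B c \<sigma> db ds u w = (1/4) * (\<i>*\<sigma>* db*(-\<i>*(c* w - \<sigma>* u)*(A-1) + w* B) + (\<i>* c* db - ds)*(\<i>*(c* u + \<sigma>* w)*(A-1) + u* B))"

lemma alg_sol:
  fixes C S s E db ds sg :: complex
  assumes cs: "C^2 + S^2 = 1" and sg: "sg = 1 \<or> sg = -1" and s: "s \<noteq> 0"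
  defines "u \<equiv> C* s* E - S* sg*\<i>* E" and "w \<equiv> S* s* E + C* sg*\<i>* E"
    and "dm \<equiv> (1/4)*(s*(db - \<i>* ds) + (db + \<i>* ds)/s)"
  shows "- w*(db/2) + u*(\<i>* sg* dm) = ru (mu_a (s^2)) (mu_b (s^2)) (C^2 - S^2) (2* S* C) db ds u w"
    and "u*(db/2) + w*(\<i>* sg* dm) = rw (mu_a (s^2)) (mu_b (s^2)) (C^2 - S^2) (2* S* C) db ds u w"
proof -
  have S2: "S^2 = 1 - C^2" using cs by (simp add: algebra_simps)
  show "- w*(db/2) + u*(\<i>* sg* dm) = ru (mu_a (s^2)) (mu_b (s^2)) (C^2 - S^2) (2* S* C) db ds u w"
    using sg unfolding u_def w_def dm_def ru_def mu_a_def mu_b_def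
    apply (elim disjE)
    using s apply (simp_all add: field_simps)
    using cs by algebra+
  show "u*(db/2) + w*(\<i>* sg* dm) = rw (mu_a (s^2)) (mu_b (s^2)) (C^2 - S^2) (2* S* C) db ds u w"
    using sg unfolding u_def w_def dm_def rw_def mu_a_def mu_b_def
    apply (elim disjE)
    using s apply (simp_all add: field_simps)
    using cs by algebra+
qed
lemma aux_sq: fixes a b X :: complex shows "a*a+b*b=1 \<Longrightarrow> 2*X = a*(a*(2*X)) + b*(b*(2*X))"
proof -
  assume H: "a*a+b*b=1"
  have "a*(a*(2*X)) + b*(b*(2*X)) = (a*a+b*b)*(2*X)" by (simp add: algebra_simps)
  then show ?thesis using H by simp
qed

lemma dprime_eq:
  fixes c \<sigma> :: real
  assumes h: "c^2 + \<sigma>^2 = 1"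
  shows "dprime (\<i>*c, -\<i>*\<sigma>) (\<lambda>v. (-\<i>*\<sigma>*hs_beta b v, -\<i>*c*hs_beta b v)) v
     = ((1/2) * (-\<i>*\<sigma>*hs_beta b v), (1/2)*(-\<i>*c*hs_beta b v - hs_beta b (\<i> * v)))"
proof -
  have h2: "(complex_of_real c)^2 + (complex_of_real \<sigma>)^2 = 1"
    by (metis h of_real_1 of_real_add of_real_power)
  show ?thesis
    unfolding dprime_def qmult_def
    apply (simp add: scaleR_conv_of_real)
    apply (simp add: algebra_simps)
    using h2 apply (simp add: power2_eq_square algebra_simps)
    by (rule aux_sq)
qed

lemma key_rhs:
  fixes db ds c \<sigma> :: real and x y A B :: complex
  shows "(1/2) *\<^sub>R (((1/2) * (-\<i>*\<sigma>*db), (1/2)*(-\<i>*c*db - ds))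
      \<odot> ((\<i>*c, -\<i>*\<sigma>) \<odot> (x,y) \<odot> qc (A-1) + (x,y) \<odot> qc B))
   = (ru A B c \<sigma> db ds x (cnj y), cnj (rw A B c \<sigma> db ds x (cnj y)))"
  unfolding qmult_def qc_def ru_def rw_def
  apply (simp add: scaleR_conv_of_real)
  apply (simp add: algebra_simps)
  done



definition mm :: "complex \<Rightarrow> complex \<Rightarrow> complex \<Rightarrow> complex" where
  "mm b s z = (pi/2) * (s * cnj b * z + (b / s) * cnj z)"

definition EE :: "complex \<Rightarrow> complex \<Rightarrow> complex \<Rightarrow> complex \<Rightarrow> complex" where
  "EE b s sg z = exp (\<i> * sg * mm b s z)"

definition eu :: "complex \<Rightarrow> complex \<Rightarrow> complex \<Rightarrow> complex \<Rightarrow> complex" where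
  "eu b s sg z = of_real (cos (hs_beta b z / 2)) * s * EE b s sg z
       - of_real (sin (hs_beta b z / 2)) * sg * \<i> * EE b s sg z"
definition ew :: "complex \<Rightarrow> complex \<Rightarrow> complex \<Rightarrow> complex \<Rightarrow> complex" where
  "ew b s sg z = of_real (sin (hs_beta b z / 2)) * s * EE b s sg z
       + of_real (cos (hs_beta b z / 2)) * sg * \<i> * EE b s sg z"

lemma hs_beta_deriv: "(hs_beta b has_derivative hs_beta b) (at z)"
proof -
  have "hs_beta b = (\<lambda>z. 2 * pi * Re (b * cnj z))"
    by (auto simp: hs_beta_def ip_def)
  moreover have "((\<lambda>z. 2 * pi * Re (b * cnj z)) has_derivative (\<lambda>z. 2 * pi * Re (b * cnj z))) (at z)"
    by (auto intro!: derivative_eq_intros)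
  ultimately show ?thesis by simp
qed

lemma lin2_deriv: "((\<lambda>z. K1 * z + K2 * cnj z) has_derivative (\<lambda>z. K1 * z + K2 * cnj z)) (at z)"
  by (auto intro!: derivative_eq_intros)

lemma mm_deriv: "(mm b s has_derivative mm b s) (at z)"
proof -
  have "mm b s = (\<lambda>z. (pi/2 * s * cnj b) * z + (pi/2 * (b/s)) * cnj z)"
    by (auto simp: mm_def algebra_simps)
  then show ?thesis using lin2_deriv by metis
qed

lemma EE_deriv: "(EE b s sg has_derivative (\<lambda>v. EE b s sg z * (\<i> * sg * mm b s v))) (at z)"
proof -
  have e: "(exp has_derivative (\<lambda>h. exp (\<i> * sg * mm b s z) * h)) (at (\<i> * sg * mm b s z))"
    using DERIV_exp[of "\<i> * sg * mm b s z"] by (simp add: has_field_derivative_def)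
  have g: "((\<lambda>z. \<i> * sg * mm b s z) has_derivative (\<lambda>v. \<i> * sg * mm b s v)) (at z)"
    by (auto intro!: derivative_eq_intros mm_deriv)
  show ?thesis unfolding EE_def[abs_def] using has_derivative_compose[OF g e] by simp
qed

lemma eu_deriv: "(eu b s sg has_derivative
   (\<lambda>v. - ew b s sg z * (of_real (hs_beta b v) / 2) + eu b s sg z * (\<i> * sg * mm b s v))) (at z)"
  unfolding eu_def[abs_def] ew_def
  by (auto intro!: derivative_eq_intros hs_beta_deriv EE_deriv simp: algebra_simps)

lemma ew_deriv: "(ew b s sg has_derivative
   (\<lambda>v. eu b s sg z * (of_real (hs_beta b v) / 2) + ew b s sg z * (\<i> * sg * mm b s v))) (at z)"
  unfolding ew_def[abs_def] eu_def
  by (auto intro!: derivative_eq_intros hs_beta_deriv EE_deriv simp: algebra_simps)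





lemma alg_sol':
  fixes C S s E db ds sg c \<sigma> dm u w :: complex
  assumes cs: "C^2 + S^2 = 1" and sg: "sg = 1 \<or> sg = -1" and s: "s \<noteq> 0"
    and "c = C^2 - S^2" "\<sigma> = 2 * S * C" "dm = (1/4)*(s*(db - \<i>* ds) + (db + \<i>* ds)/s)"
    "u = C * s * E - S * sg * \<i> * E" "w = S * s * E + C * sg * \<i> * E"
  shows "- w*(db/2) + u*(\<i>* sg* dm) = ru (mu_a (s^2)) (mu_b (s^2)) c \<sigma> db ds u w"
    and "u*(db/2) + w*(\<i>* sg* dm) = rw (mu_a (s^2)) (mu_b (s^2)) c \<sigma> db ds u w"
  unfolding assms(4-8)
  by (rule alg_sol(1)[OF cs sg s], rule alg_sol(2)[OF cs sg s])

lemma trace0: "ru A B c \<sigma> db ds u w * w' + u * rw A B c \<sigma> db ds u' w'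
   - rw A B c \<sigma> db ds u w * u' - w * ru A B c \<sigma> db ds u' w' = 0"
  unfolding ru_def rw_def by (simp add: algebra_simps)

lemma qmult_uminus_left: "(- p) \<odot> q = - (p \<odot> q)"
  by (cases p; cases q) (simp add: qmult_def)

lemma hsN_eq: "hs_N b = (\<lambda>z. (\<i> * of_real (cos (hs_beta b z)), - \<i> * of_real (sin (hs_beta b z))))"
  by (auto simp: hs_N_def qexpj_def qc_def qmult_def)

lemma hsN_deriv: "(hs_N b has_derivative (\<lambda>v. (- \<i> * of_real (sin (hs_beta b z)) * of_real (hs_beta b v),
     - \<i> * of_real (cos (hs_beta b z)) * of_real (hs_beta b v)))) (at z)"
  unfolding hsN_eq by (auto intro!: derivative_eq_intros hs_beta_deriv simp: algebra_simps)

definition RU :: "complex \<Rightarrow> complex \<Rightarrow> complex \<Rightarrow> complex \<Rightarrow> complex \<Rightarrow> complex \<Rightarrow> complex" where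
  "RU \<mu> b z v u w = ru (mu_a \<mu>) (mu_b \<mu>) (of_real (cos (hs_beta b z))) (of_real (sin (hs_beta b z)))
     (of_real (hs_beta b v)) (of_real (hs_beta b (\<i> * v))) u w"
definition RW :: "complex \<Rightarrow> complex \<Rightarrow> complex \<Rightarrow> complex \<Rightarrow> complex \<Rightarrow> complex \<Rightarrow> complex" where
  "RW \<mu> b z v u w = rw (mu_a \<mu>) (mu_b \<mu>) (of_real (cos (hs_beta b z))) (of_real (sin (hs_beta b z)))
     (of_real (hs_beta b v)) (of_real (hs_beta b (\<i> * v))) u w"

lemma parallel_char:
  assumes dN: "\<And>z. (hs_N b has_derivative dN z) (at z)"
    and H: "\<And>z v. dprime (hs_N b z) (dN z) v = - (hs_df b g z v \<odot> H z)"
  shows "parallel_section b g H \<mu> \<alpha> \<longleftrightarrow> (\<forall>z. \<exists>D. (\<alpha> has_derivative D) (at z) \<and>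
     (\<forall>v. D v = (RU \<mu> b z v (fst (\<alpha> z)) (cnj (snd (\<alpha> z))), cnj (RW \<mu> b z v (fst (\<alpha> z)) (cnj (snd (\<alpha> z)))))))"
proof -
  have key: "(1/2) *\<^sub>R (hs_df b g z v \<odot> H z \<odot> (hs_N b z \<odot> \<alpha> z \<odot> qc (mu_a \<mu> - 1) + \<alpha> z \<odot> qc (mu_b \<mu>)))
     = - (RU \<mu> b z v (fst (\<alpha> z)) (cnj (snd (\<alpha> z))), cnj (RW \<mu> b z v (fst (\<alpha> z)) (cnj (snd (\<alpha> z)))))" for z v
  proof -
    have dNe: "dN z = (\<lambda>v. (- \<i> * of_real (sin (hs_beta b z)) * of_real (hs_beta b v),
     - \<i> * of_real (cos (hs_beta b z)) * of_real (hs_beta b v)))"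
      using has_derivative_unique[OF dN hsN_deriv] by simp
    have "hs_df b g z v \<odot> H z = - dprime (hs_N b z) (dN z) v" using H[of z v] by simp
    also have "\<dots> = - ((1/2) * (-\<i>* of_real (sin (hs_beta b z))* of_real (hs_beta b v)),
        (1/2)*(-\<i>* of_real (cos (hs_beta b z))* of_real (hs_beta b v) - of_real (hs_beta b (\<i> * v))))"
      using dprime_eq[of "cos (hs_beta b z)" "sin (hs_beta b z)" b v] dNe hsN_eq by simp
    finally have e: "hs_df b g z v \<odot> H z = \<dots>" .
    obtain x y where xy: "\<alpha> z = (x,y)" by (cases "\<alpha> z")
    show ?thesis
      unfolding e xy qmult_uminus_left scaleR_minus_right hsN_eq fst_conv snd_conv RU_def RW_def
      by (subst key_rhs) (rule refl)
  qed
  show ?thesis unfolding parallel_section_def key by (simp only: diff_conv_add_uminus[symmetric] right_minus_eq)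
qed

lemma mm_eq: "mm b s v = (1/4) * (s * (of_real (hs_beta b v) - \<i> * of_real (hs_beta b (\<i> * v)))
    + (of_real (hs_beta b v) + \<i> * of_real (hs_beta b (\<i> * v))) / s)"
proof -
  have 1: "of_real (hs_beta b v) + \<i> * of_real (hs_beta b (\<i> * v)) = 2 * pi * (b * cnj v)"
    by (simp add: complex_eq_iff hs_beta_def ip_def algebra_simps)
  have 2: "of_real (hs_beta b v) - \<i> * of_real (hs_beta b (\<i> * v)) = 2 * pi * (cnj b * v)"
    by (simp add: complex_eq_iff hs_beta_def ip_def algebra_simps)
  show ?thesis unfolding 1 2 mm_def by (simp add: field_simps)
qed

lemma esol_rhs:
  assumes s: "s \<noteq> 0" and sg: "sg = 1 \<or> sg = -1"
  shows "- ew b s sg z * (of_real (hs_beta b v) / 2) + eu b s sg z * (\<i> * sg * mm b s v)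
       = RU (s^2) b z v (eu b s sg z) (ew b s sg z)"
    and "eu b s sg z * (of_real (hs_beta b v) / 2) + ew b s sg z * (\<i> * sg * mm b s v)
       = RW (s^2) b z v (eu b s sg z) (ew b s sg z)"
proof -
  define C where "C = complex_of_real (cos (hs_beta b z / 2))"
  define S where "S = complex_of_real (sin (hs_beta b z / 2))"
  have cs: "C^2 + S^2 = 1" unfolding C_def S_def
    by (metis of_real_1 of_real_add of_real_power sin_cos_squared_add2)
  have c: "complex_of_real (cos (hs_beta b z)) = C^2 - S^2" unfolding C_def S_def
    using cos_double[of "hs_beta b z / 2"] by simp
  have \<sigma>: "complex_of_real (sin (hs_beta b z)) = 2 * S * C" unfolding C_def S_def
    using sin_double[of "hs_beta b z / 2"] by simp
  have u: "eu b s sg z = C * s * EE b s sg z - S * sg * \<i> * EE b s sg z"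
    unfolding eu_def C_def S_def ..
  have w: "ew b s sg z = S * s * EE b s sg z + C * sg * \<i> * EE b s sg z"
    unfolding ew_def C_def S_def ..
  show "- ew b s sg z * (of_real (hs_beta b v) / 2) + eu b s sg z * (\<i> * sg * mm b s v)
       = RU (s^2) b z v (eu b s sg z) (ew b s sg z)"
    unfolding RU_def by (rule alg_sol'(1)[OF cs sg s c \<sigma> mm_eq u w])
  show "eu b s sg z * (of_real (hs_beta b v) / 2) + ew b s sg z * (\<i> * sg * mm b s v)
       = RW (s^2) b z v (eu b s sg z) (ew b s sg z)"
    unfolding RW_def by (rule alg_sol'(2)[OF cs sg s c \<sigma> mm_eq u w])
qed

lemma eu_deriv':
  assumes "s \<noteq> 0" "sg = 1 \<or> sg = -1"
  shows "(eu b s sg has_derivative (\<lambda>v. RU (s^2) b z v (eu b s sg z) (ew b s sg z))) (at z)"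
  by (rule has_derivative_eq_rhs[OF eu_deriv]) (use esol_rhs(1)[OF assms] in auto)

lemma ew_deriv':
  assumes "s \<noteq> 0" "sg = 1 \<or> sg = -1"
  shows "(ew b s sg has_derivative (\<lambda>v. RW (s^2) b z v (eu b s sg z) (ew b s sg z))) (at z)"
  by (rule has_derivative_eq_rhs[OF ew_deriv]) (use esol_rhs(2)[OF assms] in auto)

lemma esol_parallel:
  assumes dN: "\<And>z. (hs_N b has_derivative dN z) (at z)"
    and H: "\<And>z v. dprime (hs_N b z) (dN z) v = - (hs_df b g z v \<odot> H z)"
    and s: "s \<noteq> 0" and sg: "sg = 1 \<or> sg = -1"
  shows "parallel_section b g H (s^2) (\<lambda>z. (eu b s sg z, cnj (ew b s sg z)))"
  unfolding parallel_char[OF dN H]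
proof
  fix z
  show "\<exists>D. ((\<lambda>z. (eu b s sg z, cnj (ew b s sg z))) has_derivative D) (at z) \<and>
          (\<forall>v. D v = (RU (s^2) b z v (fst (eu b s sg z, cnj (ew b s sg z))) (cnj (snd (eu b s sg z, cnj (ew b s sg z)))),
               cnj (RW (s^2) b z v (fst (eu b s sg z, cnj (ew b s sg z))) (cnj (snd (eu b s sg z, cnj (ew b s sg z)))))))"
    using has_derivative_Pair[OF eu_deriv'[OF s sg] has_derivative_cnj[OF ew_deriv'[OF s sg]]]
    by auto
qed

lemma det_const:
  assumes dN: "\<And>z. (hs_N b has_derivative dN z) (at z)"
    and H: "\<And>z v. dprime (hs_N b z) (dN z) v = - (hs_df b g z v \<odot> H z)"
    and s: "s \<noteq> 0" and sg: "sg = 1 \<or> sg = -1"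
    and par: "parallel_section b g H (s^2) \<alpha>"
  shows "\<exists>K. \<forall>z. fst (\<alpha> z) * ew b s sg z - cnj (snd (\<alpha> z)) * eu b s sg z = K"
proof -
  have "\<exists>K. \<forall>z\<in>UNIV. fst (\<alpha> z) * ew b s sg z - cnj (snd (\<alpha> z)) * eu b s sg z = K"
  proof (rule has_derivative_zero_constant[OF convex_UNIV])
    fix x :: complex
    from par[unfolded parallel_char[OF dN H]] obtain D where D: "(\<alpha> has_derivative D) (at x)"
      and Dv: "\<forall>v. D v = (RU (s^2) b x v (fst (\<alpha> x)) (cnj (snd (\<alpha> x))), cnj (RW (s^2) b x v (fst (\<alpha> x)) (cnj (snd (\<alpha> x)))))"
      by blast
    note d0 = has_derivative_diff[OF has_derivative_mult[OF has_derivative_fst[OF D] ew_deriv'[OF s sg]]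
        has_derivative_mult[OF has_derivative_cnj[OF has_derivative_snd[OF D]] eu_deriv'[OF s sg]]]
    show "((\<lambda>z. fst (\<alpha> z) * ew b s sg z - cnj (snd (\<alpha> z)) * eu b s sg z) has_derivative (\<lambda>h. 0)) (at x within UNIV)"
      apply (rule has_derivative_eq_rhs[OF d0])
      apply (rule ext)
      apply (simp add: Dv)
      apply (simp add: RU_def RW_def ru_def rw_def algebra_simps)
      done
  qed
  then show ?thesis by simp
qed



lemma ip_add: "ip b (z + g) = ip b z + ip b g"
  by (simp add: ip_def algebra_simps)

lemma hs_beta_add: "hs_beta b (z + g) = hs_beta b z + hs_beta b g"
  by (simp add: hs_beta_def ip_def algebra_simps)

lemma mm_add: "mm b s (z + g) = mm b s z + mm b s g"
  by (simp add: mm_def algebra_simps)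

lemma EE_add: "EE b s sg (z + g) = EE b s sg z * EE b s sg g"
  by (simp add: EE_def mm_add algebra_simps exp_add[symmetric])

lemma sin_int_pi: "sin (pi * of_int k) = 0"
  by (simp add: sin_zero_iff_int2 mult.commute)

lemma cos_int_pi_sq: "cos (pi * of_int k) * cos (pi * of_int k) = 1"
  using sin_cos_squared_add2[of "pi * of_int k"] sin_int_pi[of k] by (simp add: power2_eq_square)

lemma e_shift:
  assumes k: "ip b g = of_int k"
  shows "eu b s sg (z + g) = of_real (cos (pi * of_int k)) * EE b s sg g * eu b s sg z"
    and "ew b s sg (z + g) = of_real (cos (pi * of_int k)) * EE b s sg g * ew b s sg z"
proof -
  have h: "hs_beta b (z + g) / 2 = hs_beta b z / 2 + pi * of_int k"
    using k by (simp add: hs_beta_def ip_add field_simps)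
  show "eu b s sg (z + g) = of_real (cos (pi * of_int k)) * EE b s sg g * eu b s sg z"
    unfolding eu_def h EE_add cos_add sin_add sin_int_pi by (simp add: algebra_simps)
  show "ew b s sg (z + g) = of_real (cos (pi * of_int k)) * EE b s sg g * ew b s sg z"
    unfolding ew_def h EE_add cos_add sin_add sin_int_pi by (simp add: algebra_simps)
qed

lemma EE_int:
  assumes m: "mm b s g = of_real (pi * of_int n)" and sg: "sg = 1 \<or> sg = -1"
  shows "EE b s sg g = of_real (cos (pi * of_int n))"
  using sg
proof
  assume "sg = 1"
  then have "EE b s sg g = cis (pi * of_int n)" by (simp add: EE_def m cis_conv_exp)
  then show ?thesis by (simp add: cis.ctr sin_int_pi complex_of_real_def)
next
  assume "sg = -1"
  then have "EE b s sg g = cis (- (pi * of_int n))" by (simp add: EE_def m cis_conv_exp)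
  then show ?thesis by (simp add: cis.ctr sin_int_pi complex_of_real_def)
qed

lemma mm_unit:
  assumes u: "cmod s = 1"
  shows "mm b s g = of_real (pi * ip (b * cnj s) g)"
proof -
  have ss: "s * cnj s = 1" using u complex_norm_square[of s] by simp
  have s0: "s \<noteq> 0" using u by auto
  have bs: "b / s = b * cnj s" using ss s0 by (simp add: field_simps)
  define X where "X = b * cnj s * cnj g"
  have "mm b s g = of_real (pi/2) * (cnj X + X)"
    unfolding mm_def bs X_def by (simp add: algebra_simps)
  also have "\<dots> = of_real (pi * Re X)" unfolding complex_add_cnj[of X, simplified add.commute] 
    by (simp add: add.commute complex_add_cnj)
  finally show ?thesis by (simp add: ip_def X_def)
qed

lemma unit_from:
  assumes lat: "Im (w1 * cnj w2) \<noteq> 0" and b: "b \<noteq> 0" and s: "s \<noteq> 0"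
    and i1: "Im (mm b s w1) = 0" and i2: "Im (mm b s w2) = 0"
  shows "cmod s = 1"
proof (rule ccontr)
  assume ne: "cmod s \<noteq> 1"
  define r where "r = (cmod s)^2"
  have r0: "r > 0" using s by (simp add: r_def)
  have r1: "r \<noteq> 1"
  proof
    assume "r = 1"
    then have "cmod s = 1 \<or> cmod s = -1" by (simp add: r_def power2_eq_1_iff)
    then show False using ne norm_ge_zero[of s] by linarith
  qed
  have ss: "s * cnj s = of_real r" using complex_norm_square[of s] by (simp add: r_def)
  have bs: "b / s = b * cnj s / of_real r" using ss s r0 by (simp add: field_simps)
  have imX: "Im (b * cnj s * cnj g) = 0" if "Im (mm b s g) = 0" for g
  proof -
    define X where "X = b * cnj s * cnj g"
    have mX: "mm b s g = of_real (pi/2) * (cnj X + X / of_real r)"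
      unfolding mm_def bs X_def by (simp add: algebra_simps)
    have "Im (mm b s g) = Im (of_real (pi/2) * (cnj X + X / of_real r))"
      by (subst mX) (rule refl)
    also have "\<dots> = pi/2 * (Im X / r - Im X)"
      by (simp add: Im_divide_of_real algebra_simps)
    finally have "Im (mm b s g) = pi/2 * (Im X / r - Im X)" .
    then have "Im X / r - Im X = 0" using that by simp
    then have "Im X * (1/r - 1) = 0" by (simp add: right_diff_distrib)
    moreover have "1/r - 1 \<noteq> 0" using r1 r0 by (simp add: field_simps)
    ultimately have "Im X = 0" using r0 by auto
    then show ?thesis by (simp only: X_def)
  qed
  define C0 where "C0 = b * cnj s"
  have C0: "C0 \<noteq> 0" using b s by (simp add: C0_def)
  have e1: "Im (C0 * cnj w1) = 0" using imX[OF i1] by (simp add: C0_def)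
  have e2: "Im (C0 * cnj w2) = 0" using imX[OF i2] by (simp add: C0_def)
  have "Im (cnj (C0 * cnj w1) * (C0 * cnj w2)) = (cmod C0)^2 * Im (w1 * cnj w2)"
    unfolding cmod_power2 by (simp add: algebra_simps power2_eq_square)
  moreover have "Im (cnj (C0 * cnj w1) * (C0 * cnj w2)) = 0"
  proof -
    have gen: "Im (cnj P * Q) = 0" if "Im P = 0" "Im Q = 0" for P Q :: complex using that by simp
    show ?thesis by (rule gen[OF e1 e2])
  qed
  ultimately show False using lat C0 by simp
qed

lemma e_det:
  "eu b s 1 z * ew b s (-1) z - ew b s 1 z * eu b s (-1) z = - 2 * \<i> * s"
proof -
  define C where "C = complex_of_real (cos (hs_beta b z / 2))"
  define S where "S = complex_of_real (sin (hs_beta b z / 2))"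
  have cs: "C^2 + S^2 = 1" unfolding C_def S_def
    by (metis of_real_1 of_real_add of_real_power sin_cos_squared_add2)
  have ee: "EE b s 1 z * EE b s (-1) z = 1"
    by (simp add: EE_def exp_add[symmetric])
  show ?thesis unfolding eu_def ew_def C_def[symmetric] S_def[symmetric]
    using cs ee by algebra
qed



theorem corollary5p4:
  fixes w1 w2 \<beta>0 \<mu> :: complex
    and f g H :: "complex \<Rightarrow> quat"
    and dN :: "complex \<Rightarrow> complex \<Rightarrow> quat"
  assumes lattice: "Im (w1 * cnj w2) \<noteq> 0"
    and beta0: "\<beta>0 \<in> dual_lattice (lattice_gen w1 w2)" "\<beta>0 \<noteq> 0"
    and smooth: "smooth_fun f"
    and periodic: "\<And>z \<gamma>. \<gamma> \<in> lattice_gen w1 w2 \<Longrightarrow> f (z + \<gamma>) = f z"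
    and g_nz: "\<And>z. g z \<noteq> 0"
    and df: "\<And>z. (f has_derivative hs_df \<beta>0 g z) (at z)"
    and dN: "\<And>z. (hs_N \<beta>0 has_derivative dN z) (at z)"
    and H: "\<And>z v. dprime (hs_N \<beta>0 z) (dN z) v = - (hs_df \<beta>0 g z v \<odot> H z)"
    and mu: "\<mu> \<noteq> 0"
  shows "monodromy_scalar (lattice_gen w1 w2) \<beta>0 g H \<mu> \<longleftrightarrow>
         (cmod \<mu> = 1 \<and> (\<exists>s. s\<^sup>2 = \<mu> \<and> \<beta>0 * cnj s \<in> dual_lattice (lattice_gen w1 w2)))"
proof -
  let ?L = "lattice_gen w1 w2"
  have bint: "\<exists>k::int. ip \<beta>0 \<gamma> = of_int k" if "\<gamma> \<in> ?L" for \<gamma>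
    using beta0(1) that unfolding dual_lattice_def by (auto elim!: Ints_cases)
  have w1L: "w1 \<in> ?L" unfolding lattice_gen_def
    by (rule CollectI, rule exI[of _ 1], rule exI[of _ 0]) simp
  have w2L: "w2 \<in> ?L" unfolding lattice_gen_def
    by (rule CollectI, rule exI[of _ 0], rule exI[of _ 1]) simp
  show ?thesis
  proof
    assume ms: "monodromy_scalar ?L \<beta>0 g H \<mu>"
    define s where "s = csqrt \<mu>"
    have s2: "s^2 = \<mu>" by (simp add: s_def)
    have s0: "s \<noteq> 0" using mu s2 by auto
    have parp: "parallel_section \<beta>0 g H \<mu> (\<lambda>z. (eu \<beta>0 s sg z, cnj (ew \<beta>0 s sg z)))"
      if "sg = 1 \<or> sg = -1" for sg
      using esol_parallel[OF dN H s0 that] s2 by simp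
    have key: "Im (mm \<beta>0 s \<gamma>) = 0 \<and> (\<exists>n::int. Re (mm \<beta>0 s \<gamma>) = pi * of_int n)"
      if \<gamma>: "\<gamma> \<in> ?L" for \<gamma>
    proof -
      obtain c where c: "\<forall>\<alpha>. parallel_section \<beta>0 g H \<mu> \<alpha> \<longrightarrow> (\<forall>z. \<alpha> (z + \<gamma>) = \<alpha> z \<odot> qc c)"
        using ms \<gamma> unfolding monodromy_scalar_def by blast
      obtain k where k: "ip \<beta>0 \<gamma> = of_int k" using bint \<gamma> by blast
      have eu0: "eu \<beta>0 s sg 0 = s" for sg
        by (simp add: eu_def EE_def mm_def hs_beta_def ip_def)
      have fst_eq: "eu \<beta>0 s sg \<gamma> = s * c" if sg: "sg = 1 \<or> sg = -1" for sg
      proof -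
        have "(\<lambda>z. (eu \<beta>0 s sg z, cnj (ew \<beta>0 s sg z))) (0 + \<gamma>) = (\<lambda>z. (eu \<beta>0 s sg z, cnj (ew \<beta>0 s sg z))) 0 \<odot> qc c"
          using c parp[OF sg] by blast
        then have "eu \<beta>0 s sg \<gamma> = eu \<beta>0 s sg 0 * c" by (simp add: qmult_def qc_def)
        then show ?thesis using eu0 by simp
      qed
      have sh: "eu \<beta>0 s sg \<gamma> = of_real (cos (pi * of_int k)) * EE \<beta>0 s sg \<gamma> * s" for sg
        using e_shift(1)[OF k, of s sg 0] eu0 by simp
      define ck where "ck = complex_of_real (cos (pi * of_int k))"
      have ck0: "ck \<noteq> 0"
        using cos_int_pi_sq[of k] unfolding ck_def by auto
      have a1: "eu \<beta>0 s 1 \<gamma> = ck * EE \<beta>0 s 1 \<gamma> * s" unfolding ck_def by (rule sh)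
      have a2: "eu \<beta>0 s (-1) \<gamma> = ck * EE \<beta>0 s (-1) \<gamma> * s" unfolding ck_def by (rule sh)
      have "ck * EE \<beta>0 s 1 \<gamma> * s = ck * EE \<beta>0 s (-1) \<gamma> * s"
        using fst_eq[of 1] fst_eq[of "-1"] a1 a2 s0 by simp
      then have EEeq: "EE \<beta>0 s 1 \<gamma> = EE \<beta>0 s (-1) \<gamma>" using ck0 s0 by simp
      define m where "m = mm \<beta>0 s \<gamma>"
      have "exp (\<i> * m) = exp (- (\<i> * m))" using EEeq by (simp add: EE_def m_def)
      then have "exp (2 * \<i> * m) = 1"
        by (metis (no_types, lifting) add.inverse_inverse exp_add exp_minus_inverse mult.assoc
            mult_2 ring_class.ring_distribs(2))
      then obtain n :: int where "Re (2 * \<i> * m) = 0" "Im (2 * \<i> * m) = of_int (2 * n) * pi"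
        unfolding exp_eq_1 by blast
      then have "Im m = 0" "Re m = pi * of_int n" by simp_all
      then show ?thesis by (auto simp: m_def)
    qed
    have unit: "cmod s = 1"
      using unit_from[OF lattice beta0(2) s0] key[OF w1L] key[OF w2L] by blast
    have "cmod \<mu> = 1" using unit s2 by (metis norm_power power_one)
    moreover have "\<beta>0 * cnj s \<in> dual_lattice ?L"
      unfolding dual_lattice_def
    proof (intro CollectI ballI)
      fix \<gamma> assume \<gamma>: "\<gamma> \<in> ?L"
      obtain n :: int where n: "Re (mm \<beta>0 s \<gamma>) = pi * of_int n" using key[OF \<gamma>] by blast
      have "Re (mm \<beta>0 s \<gamma>) = pi * ip (\<beta>0 * cnj s) \<gamma>" using mm_unit[OF unit] by simp
      with n have "ip (\<beta>0 * cnj s) \<gamma> = of_int n" by simp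
      then show "ip (\<beta>0 * cnj s) \<gamma> \<in> \<int>" by simp
    qed
    ultimately show "cmod \<mu> = 1 \<and> (\<exists>s. s\<^sup>2 = \<mu> \<and> \<beta>0 * cnj s \<in> dual_lattice ?L)"
      using s2 by blast
  next
    assume R: "cmod \<mu> = 1 \<and> (\<exists>s. s\<^sup>2 = \<mu> \<and> \<beta>0 * cnj s \<in> dual_lattice ?L)"
    then obtain s where s2: "s^2 = \<mu>" and sdual: "\<beta>0 * cnj s \<in> dual_lattice ?L" by blast
    have s0: "s \<noteq> 0" using mu s2 by auto
    have "(cmod s)^2 = 1" using R s2 by (metis norm_power)
    then have unit: "cmod s = 1" using norm_ge_zero[of s] by (simp add: power2_eq_1_iff) 
    show "monodromy_scalar ?L \<beta>0 g H \<mu>"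
      unfolding monodromy_scalar_def
    proof
      fix \<gamma> assume \<gamma>: "\<gamma> \<in> ?L"
      obtain k where k: "ip \<beta>0 \<gamma> = of_int k" using bint \<gamma> by blast
      obtain n :: int where n: "ip (\<beta>0 * cnj s) \<gamma> = of_int n"
        using sdual \<gamma> unfolding dual_lattice_def by (auto elim!: Ints_cases)
      have mmg: "mm \<beta>0 s \<gamma> = of_real (pi * of_int n)" using mm_unit[OF unit] n by simp
      define lam where "lam = complex_of_real (cos (pi * of_int k) * cos (pi * of_int n))"
      have lam2: "lam * lam = 1"
      proof -
        have "lam * lam = of_real ((cos (pi * of_int k) * cos (pi * of_int k)) * (cos (pi * of_int n) * cos (pi * of_int n)))"
          by (simp add: lam_def algebra_simps)
        then show ?thesis using cos_int_pi_sq[of k] cos_int_pi_sq[of n] by simp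
      qed
      have lamc: "cnj lam = lam" by (simp add: lam_def)
      have shift: "eu \<beta>0 s sg (z + \<gamma>) = lam * eu \<beta>0 s sg z \<and> ew \<beta>0 s sg (z + \<gamma>) = lam * ew \<beta>0 s sg z"
        if sg: "sg = 1 \<or> sg = -1" for sg z
        using e_shift[OF k, of s sg z] EE_int[OF mmg sg] by (simp add: lam_def)
      show "\<exists>c. \<forall>\<alpha>. parallel_section \<beta>0 g H \<mu> \<alpha> \<longrightarrow> (\<forall>z. \<alpha> (z + \<gamma>) = \<alpha> z \<odot> qc c)"
      proof (intro exI[of _ lam] allI impI)
        fix \<alpha> z assume par: "parallel_section \<beta>0 g H \<mu> \<alpha>"
        have par': "parallel_section \<beta>0 g H (s^2) \<alpha>" using par s2 by simp
        define p where "p = fst (\<alpha> (z + \<gamma>)) - lam * fst (\<alpha> z)"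
        define q where "q = cnj (snd (\<alpha> (z + \<gamma>))) - lam * cnj (snd (\<alpha> z))"
        have hp: "p * ew \<beta>0 s sg z - q * eu \<beta>0 s sg z = 0" if sg: "sg = 1 \<or> sg = -1" for sg
        proof -
          obtain K where K: "\<forall>z. fst (\<alpha> z) * ew \<beta>0 s sg z - cnj (snd (\<alpha> z)) * eu \<beta>0 s sg z = K"
            using det_const[OF dN H s0 sg par'] by blast
          have "fst (\<alpha> (z + \<gamma>)) * (lam * ew \<beta>0 s sg z) - cnj (snd (\<alpha> (z + \<gamma>))) * (lam * eu \<beta>0 s sg z)
              = fst (\<alpha> z) * ew \<beta>0 s sg z - cnj (snd (\<alpha> z)) * eu \<beta>0 s sg z"
            using K[rule_format, of "z + \<gamma>"] K[rule_format, of z] shift[OF sg, of z] by simp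
          then have "lam * (fst (\<alpha> (z + \<gamma>)) * (lam * ew \<beta>0 s sg z) - cnj (snd (\<alpha> (z + \<gamma>))) * (lam * eu \<beta>0 s sg z))
              = lam * (fst (\<alpha> z) * ew \<beta>0 s sg z - cnj (snd (\<alpha> z)) * eu \<beta>0 s sg z)" by simp
          then have "(lam * lam) * (fst (\<alpha> (z + \<gamma>)) * ew \<beta>0 s sg z - cnj (snd (\<alpha> (z + \<gamma>))) * eu \<beta>0 s sg z)
              = lam * (fst (\<alpha> z) * ew \<beta>0 s sg z - cnj (snd (\<alpha> z)) * eu \<beta>0 s sg z)"
            by (simp add: algebra_simps)
          then show ?thesis unfolding lam2 p_def q_def by (simp add: algebra_simps)
        qed
        have h1: "p * ew \<beta>0 s 1 z - q * eu \<beta>0 s 1 z = 0" using hp by simp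
        have h2: "p * ew \<beta>0 s (-1) z - q * eu \<beta>0 s (-1) z = 0" using hp by simp
        have det: "eu \<beta>0 s 1 z * ew \<beta>0 s (-1) z - ew \<beta>0 s 1 z * eu \<beta>0 s (-1) z \<noteq> 0"
          using e_det[of \<beta>0 s z] s0 by simp
        have "p * (eu \<beta>0 s 1 z * ew \<beta>0 s (-1) z - ew \<beta>0 s 1 z * eu \<beta>0 s (-1) z)
             = eu \<beta>0 s 1 z * (p * ew \<beta>0 s (-1) z - q * eu \<beta>0 s (-1) z)
               - eu \<beta>0 s (-1) z * (p * ew \<beta>0 s 1 z - q * eu \<beta>0 s 1 z)"
          by (simp add: algebra_simps)
        then have p0: "p = 0" using h1 h2 det by simp
        have "q * (eu \<beta>0 s 1 z * ew \<beta>0 s (-1) z - ew \<beta>0 s 1 z * eu \<beta>0 s (-1) z)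
             = ew \<beta>0 s 1 z * (p * ew \<beta>0 s (-1) z - q * eu \<beta>0 s (-1) z)
               - ew \<beta>0 s (-1) z * (p * ew \<beta>0 s 1 z - q * eu \<beta>0 s 1 z)"
          by (simp add: algebra_simps)
        then have q0: "q = 0" using h1 h2 det by simp
        have f1: "fst (\<alpha> (z + \<gamma>)) = fst (\<alpha> z) * lam" using p0 by (simp add: p_def)
        have "cnj (snd (\<alpha> (z + \<gamma>))) = lam * cnj (snd (\<alpha> z))" using q0 by (simp add: q_def)
        then have "snd (\<alpha> (z + \<gamma>)) = snd (\<alpha> z) * cnj lam"
          by (metis complex_cnj_cnj complex_cnj_mult mult.commute)
        with f1 show "\<alpha> (z + \<gamma>) = \<alpha> z \<odot> qc lam"
          by (simp add: qmult_def qc_def prod_eq_iff)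
      qed
    qed
  qed
qed

end
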